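(* Let $(S,A,P,R,\Gamma)$ be a finite MDP, $\mathcal{C}=\mathring{\mathcal{C}}\cup\partial\mathcal{C}$ a cluster, and $\pi_{\mathcal{C}}$ a policy on $\mathcal{C}$ for which $\partial\mathcal{C}$ is $\pi_{\mathcal{C}}$-reachable; let $a\in\widetilde{A}$ be the coarse action "execute $\pi_{\mathcal{C}}$ in $\mathcal{C}$" and $(X_t)_{t\ge0}$ the associated controlled Markov chain with transition matrix $P^{\pi_{\mathcal{C}}}_{\mathcal{C}}$. The coarse discount factors are characterized by \[ \widetilde{\Gamma}(s,a,s')=\mathbb{E}_s[\Delta_0^{T_1}\mid X_{T_1}=s'],\qquad(s,s')\in\operatorname{supp}_a(\widetilde{P}), \] and, letting $H_{s,s'}:=\widetilde{\Gamma}(s,a,s')$ (and $H_{s,s'}=\mathbb{E}_s[\Delta_0^{T_0}\mid X_{T_0}=s']$ for interior $s$), they may be computed by finding the minimal non-negative solution $H$ of the linear system \[ H_{s,s'}=\sum_{s''\in\mathring{\mathcal{C}}\cap\mathcal{C}'_{s'},\,a'\in A}P_{h_{s'}}(s,a',s'')\Gamma(s,a',s'')H_{s'',s'}+\sum_{a'\in A}P_{h_{s'}}(s,a',s')\Gamma(s,a',s'),\quad s\in\mathring{\mathcal{C}}\cap\mathcal{C}'_{s'}, \] \[ H_{s,s'}=\sum_{s''\in\mathring{\mathcal{C}}\cap\mathcal{C}'_{s'},\,a'\in A}P_{\tilde h_{s'}}(s,a',s'')\Gamma(s,a',s'')H_{s'',s'}+\sum_{a'\in A}P_{\tilde h_{s'}}(s,a',s')\Gamma(s,a',s'),\quad(s,s')\in\operatorname{supp}_a(\widetilde{P}).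 \]
   Context: A finite MDP $(S,A,P,R,\Gamma)$ has finite statespace $S$, finite action set $A$, transition tensor $P(s,a,s')$, bounded rewards $R$, discount factors $\Gamma(s,a,s')\in(0,1)$. A policy gives distributions $\pi(s,\cdot)$ on $A$. With bottleneck set $\mathcal{B}$, a cluster $\mathcal{C}$ is a disjoint union of interior $\mathring{\mathcal{C}}\subseteq S\setminus\mathcal{B}$ and boundary $\partial\mathcal{C}\subseteq\mathcal{B}$. The restriction is $P_{\mathcal{C}}(s,a,s')=P(s,a,s')$ for $s\ne s'\in\mathcal{C}$, $P_{\mathcal{C}}(s,a,s)=P(s,a,s)+\sum_{s''\notin\mathcal{C}}P(s,a,s'')$; $P^\pi_{\mathcal{C}}(s,s')=\sum_aP_{\mathcal{C}}(s,a,s')\pi(s,a)$; $\partial\mathcal{C}$ is $\pi$-reachable if reached in finitely many steps of $P^\pi_{\mathcal{C}}$ from every state in $\mathcal{C}$. The chain: $a_{t+1}\sim\pi_{\mathcal{C}}(X_t)$, $X_{t+1}\sim P_{\mathcal{C}}(X_t,a_{t+1},\cdot)$; $\mathbb{E}_s,\mathbb{P}_s$ condition on $X_0=s$. Hitting times $T_0=\inf\{t\ge0:X_t\in\partial\mathcal{C}\}$, $T_m=\inf\{t>T_{m-1}:X_t\in\partial\mathcal{C}\}$. For stopping times $0\le T<T'<\infty$, $\Delta_T^{T'}=\prod_{t=T}^{T'-1}\Gamma(X_t,a_{t+1},X_{t+1})$. $\widetilde{P}(s,a,s')=\mathbb{P}_s(X_{T_1}=s')$ for $s,s'\in\partial\mathcal{C}$;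 $\operatorname{supp}_a(\widetilde{P})=\{(s,s')\in\partial\mathcal{C}^2:\widetilde{P}(s,a,s')>0\}$. For $s'\in\partial\mathcal{C}$, $h_{s'}(s)=\mathbb{P}_s(X_{T_0}=s')$ is the minimal non-negative function with $h_{s'}(s)=\delta_{s,s'}$ on $\partial\mathcal{C}$ and $h_{s'}(s)=P^{\pi_{\mathcal{C}}}_{\mathcal{C}}(s,s')+\sum_{s''\in\mathring{\mathcal{C}}}P^{\pi_{\mathcal{C}}}_{\mathcal{C}}(s,s'')h_{s'}(s'')$ on $\mathring{\mathcal{C}}$. $\mathcal{C}'_{s'}=\{s\in\mathcal{C}:h_{s'}(s)>0\}$, $P_{h_{s'}}(s,a',s'')=P_{\mathcal{C}}(s,a',s'')\pi_{\mathcal{C}}(s,a')h_{s'}(s'')/h_{s'}(s)$ for $s\in\mathring{\mathcal{C}}\cap\mathcal{C}'_{s'}$, and $P_{\tilde h_{s'}}(s,a',s'')=P_{\mathcal{C}}(s,a',s'')\pi_{\mathcal{C}}(s,a')h_{s'}(s'')/\widetilde{P}(s,a,s')$ for $(s,s')\in\operatorname{supp}_a(\widetilde{P})$, with $a'\in A$, $s''\in\mathcal{C}'_{s'}$. *)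

theory Defs
  imports Complex_Main
begin

text \<open>A cluster is C = Ci \<union> Cb (interior Ci, boundary Cb).\<close>

definition restrictP :: "'s::finite set \<Rightarrow> ('s \<Rightarrow> 'a \<Rightarrow> 's \<Rightarrow> real) \<Rightarrow> 's \<Rightarrow> 'a \<Rightarrow> 's \<Rightarrow> real" where
  "restrictP C P s a s' =
     (if s \<in> C \<and> s' \<in> C then
        (if s = s' then P s a s + (\<Sum>s''\<in>-C. P s a s'') else P s a s')
      else 0)"

definition policyP :: "'s::finite set \<Rightarrow> ('s \<Rightarrow> 'a::finite \<Rightarrow> 's \<Rightarrow> real) \<Rightarrow> ('s \<Rightarrow> 'a \<Rightarrow> real) \<Rightarrow> 's \<Rightarrow> 's \<Rightarrow> real" where
  "policyP C P pol s s' = (\<Sum>a\<in>UNIV. restrictP C P s a s' * pol s a)"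

definition boundary_reachable :: "'s::finite set \<Rightarrow> 's set \<Rightarrow> ('s \<Rightarrow> 'a::finite \<Rightarrow> 's \<Rightarrow> real) \<Rightarrow> ('s \<Rightarrow> 'a \<Rightarrow> real) \<Rightarrow> bool" where
  "boundary_reachable C Cb P pol \<longleftrightarrow>
     (\<forall>s\<in>C. \<exists>b\<in>Cb. (s, b) \<in> {(x, y). policyP C P pol x y > 0}\<^sup>*)"

text \<open>Finite trajectories of the controlled chain: X_0 = s and a list of steps
  (a_{t+1}, X_{t+1}). The weight of a path is the product of one-step weights.\<close>
fun path_weight :: "('s \<Rightarrow> 'a \<Rightarrow> 's \<Rightarrow> real) \<Rightarrow> 's \<Rightarrow> ('a \<times> 's) list \<Rightarrow> real" where
  "path_weight w s [] = 1"
| "path_weight w s ((a, y) # xs) = w s a y * path_weight w y xs"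

definition traj :: "'s \<Rightarrow> ('a \<times> 's) list \<Rightarrow> 's list" where
  "traj s xs = s # map snd xs"

definition path_prob :: "'s::finite set \<Rightarrow> ('s \<Rightarrow> 'a \<Rightarrow> 's \<Rightarrow> real) \<Rightarrow> ('s \<Rightarrow> 'a \<Rightarrow> real) \<Rightarrow> 's \<Rightarrow> ('a \<times> 's) list \<Rightarrow> real" where
  "path_prob C P pol s xs = path_weight (\<lambda>x a y. pol x a * restrictP C P x a y) s xs"

definition path_disc :: "('s \<Rightarrow> 'a \<Rightarrow> 's \<Rightarrow> real) \<Rightarrow> 's \<Rightarrow> ('a \<times> 's) list \<Rightarrow> real" where
  "path_disc Gam s xs = path_weight Gam s xs"

text \<open>T_0 = length xs: first time t \<ge> 0 with X_t in Cb.\<close>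
definition T0_is :: "'s set \<Rightarrow> 's \<Rightarrow> ('a \<times> 's) list \<Rightarrow> bool" where
  "T0_is Cb s xs \<longleftrightarrow> traj s xs ! length xs \<in> Cb \<and> (\<forall>k<length xs. traj s xs ! k \<notin> Cb)"

text \<open>T_1 = length xs (for X_0 in Cb): first time t > 0 with X_t in Cb.\<close>
definition T1_is :: "'s set \<Rightarrow> 's \<Rightarrow> ('a \<times> 's) list \<Rightarrow> bool" where
  "T1_is Cb s xs \<longleftrightarrow> length xs \<ge> 1 \<and> traj s xs ! length xs \<in> Cb \<and>
     (\<forall>k. 0 < k \<and> k < length xs \<longrightarrow> traj s xs ! k \<notin> Cb)"

text \<open>E_s[ f(path up to T) ; T < \<infinity>, X_T = s' ] summed over the (disjoint) events T = n.\<close>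
definition stopped_sum :: "('s \<Rightarrow> ('a::finite \<times> 's::finite) list \<Rightarrow> bool) \<Rightarrow> ('s \<Rightarrow> ('a \<times> 's) list \<Rightarrow> real) \<Rightarrow> 's \<Rightarrow> 's \<Rightarrow> real" where
  "stopped_sum isT f s s' =
     (\<Sum>n. \<Sum>xs\<in>{xs. length xs = n \<and> isT s xs \<and> last (traj s xs) = s'}. f s xs)"

definition hfun :: "'s::finite set \<Rightarrow> 's set \<Rightarrow> ('s \<Rightarrow> 'a::finite \<Rightarrow> 's \<Rightarrow> real) \<Rightarrow> ('s \<Rightarrow> 'a \<Rightarrow> real) \<Rightarrow> 's \<Rightarrow> 's \<Rightarrow> real" where
  "hfun Ci Cb P pol s' s = stopped_sum (T0_is Cb) (path_prob (Ci \<union> Cb) P pol) s s'"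

definition Ptilde :: "'s::finite set \<Rightarrow> 's set \<Rightarrow> ('s \<Rightarrow> 'a::finite \<Rightarrow> 's \<Rightarrow> real) \<Rightarrow> ('s \<Rightarrow> 'a \<Rightarrow> real) \<Rightarrow> 's \<Rightarrow> 's \<Rightarrow> real" where
  "Ptilde Ci Cb P pol s s' = stopped_sum (T1_is Cb) (path_prob (Ci \<union> Cb) P pol) s s'"

text \<open>H_{s,s'}: for boundary s, Gammatilde(s,a,s') = E_s[Delta_0^{T_1} | X_{T_1} = s'];
  for interior s, E_s[Delta_0^{T_0} | X_{T_0} = s'] (elementary conditional expectation
  given an event: E[Delta; event] / P(event)).\<close>
definition coarse_H :: "'s::finite set \<Rightarrow> 's set \<Rightarrow> ('s \<Rightarrow> 'a::finite \<Rightarrow> 's \<Rightarrow> real) \<Rightarrow> ('s \<Rightarrow> 'a \<Rightarrow> 's \<Rightarrow> real) \<Rightarrow> ('s \<Rightarrow> 'a \<Rightarrow> real) \<Rightarrow> 's \<Rightarrow> 's \<Rightarrow> real" where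
  "coarse_H Ci Cb P Gam pol s s' =
     (if s \<in> Cb then
        stopped_sum (T1_is Cb) (\<lambda>x xs. path_prob (Ci \<union> Cb) P pol x xs * path_disc Gam x xs) s s'
          / Ptilde Ci Cb P pol s s'
      else
        stopped_sum (T0_is Cb) (\<lambda>x xs. path_prob (Ci \<union> Cb) P pol x xs * path_disc Gam x xs) s s'
          / hfun Ci Cb P pol s' s)"

text \<open>P_{h_{s'}}(s,a',s'') for interior s with h_{s'}(s) > 0.\<close>
definition P_h :: "'s::finite set \<Rightarrow> 's set \<Rightarrow> ('s \<Rightarrow> 'a::finite \<Rightarrow> 's \<Rightarrow> real) \<Rightarrow> ('s \<Rightarrow> 'a \<Rightarrow> real) \<Rightarrow> 's \<Rightarrow> 's \<Rightarrow> 'a \<Rightarrow> 's \<Rightarrow> real" where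
  "P_h Ci Cb P pol s' s a' s'' =
     restrictP (Ci \<union> Cb) P s a' s'' * pol s a' * hfun Ci Cb P pol s' s'' / hfun Ci Cb P pol s' s"

text \<open>P_{tilde h_{s'}}(s,a',s'') for boundary s with Ptilde(s,a,s') > 0.\<close>
definition P_th :: "'s::finite set \<Rightarrow> 's set \<Rightarrow> ('s \<Rightarrow> 'a::finite \<Rightarrow> 's \<Rightarrow> real) \<Rightarrow> ('s \<Rightarrow> 'a \<Rightarrow> real) \<Rightarrow> 's \<Rightarrow> 's \<Rightarrow> 'a \<Rightarrow> 's \<Rightarrow> real" where
  "P_th Ci Cb P pol s' s a' s'' =
     restrictP (Ci \<union> Cb) P s a' s'' * pol s a' * hfun Ci Cb P pol s' s'' / Ptilde Ci Cb P pol s s'"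

end

theory Submission
  imports Defs
begin


lemma pw_mult: "path_weight f s xs * path_weight g s xs = path_weight (\<lambda>x a y. f x a y * g x a y) s xs"
  by (induction xs arbitrary: s) (auto simp: algebra_simps)

lemma pw_nonneg: "(\<And>x a y. 0 \<le> w x a y) \<Longrightarrow> 0 \<le> path_weight w s xs"
  by (induction xs arbitrary: s) auto

lemma pw_mono: "(\<And>x a y. 0 \<le> w1 x a y) \<Longrightarrow> (\<And>x a y. w1 x a y \<le> w2 x a y) \<Longrightarrow>
   path_weight w1 s xs \<le> path_weight w2 s xs"
proof (induction xs arbitrary: s)
  case (Cons p xs)
  obtain a y where p: "p = (a,y)" by force
  show ?case using Cons by (auto simp: p intro!: mult_mono pw_nonneg order_trans[OF Cons.prems(1) Cons.prems(2)])
qed simp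

lemma finite_len: "finite {xs :: 'b::finite list. length xs = n}"
  using finite_lists_length_eq[of "UNIV :: 'b set" n] by simp

lemma sum_lists_Suc:
  fixes f :: "('a::finite \<times> 's::finite) list \<Rightarrow> real"
  shows "(\<Sum>xs\<in>{xs. length xs = Suc n}. f xs) = (\<Sum>a\<in>UNIV. \<Sum>y\<in>UNIV. \<Sum>ys\<in>{ys. length ys = n}. f ((a,y)#ys))"
proof -
  have e: "{xs. length xs = Suc n} = (\<lambda>(p,ys). p#ys) ` (UNIV \<times> {ys :: ('a \<times> 's) list. length ys = n})"
    by (auto simp: length_Suc_conv image_iff)
  have i: "inj_on (\<lambda>(p,ys). p#ys) (UNIV \<times> {ys :: ('a \<times> 's) list. length ys = n})"
    by (auto simp: inj_on_def)
  have "(\<Sum>xs\<in>{xs. length xs = Suc n}. f xs) = (\<Sum>(p,ys)\<in>UNIV \<times> {ys :: ('a \<times> 's) list. length ys = n}. f (p#ys))"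
    unfolding e by (subst sum.reindex[OF i]) (simp add: case_prod_unfold)
  also have "\<dots> = (\<Sum>p\<in>UNIV. \<Sum>ys\<in>{ys :: ('a \<times> 's) list. length ys = n}. f (p#ys))"
    by (rule sum.cartesian_product[symmetric])
  also have "\<dots> = (\<Sum>(a,y)\<in>UNIV \<times> UNIV. \<Sum>ys\<in>{ys :: ('a \<times> 's) list. length ys = n}. f ((a,y)#ys))"
    by (simp add: case_prod_unfold)
  also have "\<dots> = (\<Sum>a\<in>UNIV. \<Sum>y\<in>UNIV. \<Sum>ys\<in>{ys. length ys = n}. f ((a,y)#ys))"
    by (rule sum.cartesian_product[symmetric])
  finally show ?thesis .
qed

definition Fn :: "'s::finite set \<Rightarrow> ('s \<Rightarrow> 'a::finite \<Rightarrow> 's \<Rightarrow> real) \<Rightarrow> 's \<Rightarrow> nat \<Rightarrow> 's \<Rightarrow> real" where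
  "Fn Cb w t n s = (\<Sum>xs\<in>{xs. length xs = n \<and> T0_is Cb s xs \<and> last (traj s xs) = t}. path_weight w s xs)"

lemma filt: fixes g :: "'b::finite list \<Rightarrow> real" shows "finite {xs :: 'b::finite list. length xs = n} \<Longrightarrow>
  (\<Sum>xs\<in>{xs. length xs = n \<and> Q xs}. g xs) = (\<Sum>xs\<in>{xs. length xs = n}. if Q xs then g xs else 0)"
proof -
  assume f: "finite {xs :: 'b::finite list. length xs = n}"
  have "{xs. length xs = n \<and> Q xs} = {xs \<in> {xs. length xs = n}. Q xs}" by auto
  then have "(\<Sum>xs\<in>{xs. length xs = n \<and> Q xs}. g xs) = sum g {xs \<in> {xs. length xs = n}. Q xs}" by simp
  also have "\<dots> = (\<Sum>xs\<in>{xs. length xs = n}. if Q xs then g xs else 0)" by (rule sum.inter_filter[OF f])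
  finally show ?thesis .
qed

lemma Fn_alt: "Fn Cb w t n s = (\<Sum>xs\<in>{xs. length xs = n}. if T0_is Cb s xs \<and> last (traj s xs) = t then path_weight w s xs else 0)"
  unfolding Fn_def by (rule filt[OF finite_len])

lemma T0_Nil: "T0_is Cb s [] \<longleftrightarrow> s \<in> Cb"
  by (simp add: T0_is_def traj_def)

lemma T0_Cons: "T0_is Cb s ((a,y)#ys) \<longleftrightarrow> s \<notin> Cb \<and> T0_is Cb y ys"
  by (auto simp: T0_is_def traj_def less_Suc_eq_0_disj nth_Cons split: nat.splits)

lemma T1_Nil: "\<not> T1_is Cb s []"
  by (simp add: T1_is_def)

lemma T1_Cons: "T1_is Cb s ((a,y)#ys) \<longleftrightarrow> T0_is Cb y ys"
  by (auto simp: T1_is_def T0_is_def traj_def nth_Cons split: nat.splits)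

lemma last_traj_Cons: "last (traj s ((a,y)#ys)) = last (traj y ys)"
  by (simp add: traj_def)

lemma Fn_0: fixes w :: "'s::finite \<Rightarrow> 'a::finite \<Rightarrow> 's \<Rightarrow> real" shows "Fn Cb w t 0 s = (if s \<in> Cb \<and> s = t then 1 else 0)"
proof -
  have "{xs :: ('a \<times> 's) list. length xs = 0} = {[]}" (is "_ = _") by auto
  note e = this
  show ?thesis unfolding Fn_alt e by (auto simp: T0_Nil traj_def)
qed

lemma Fn_Suc: "Fn Cb w t (Suc n) s = (if s \<in> Cb then 0 else (\<Sum>a\<in>UNIV. \<Sum>y\<in>UNIV. w s a y * Fn Cb w t n y))"
  unfolding Fn_alt sum_lists_Suc
  by (auto simp: T0_Cons last_traj_Cons sum_distrib_left intro!: sum.cong)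



definition good :: "('s::finite \<Rightarrow> 'a::finite \<Rightarrow> 's \<Rightarrow> real) \<Rightarrow> bool" where
  "good w \<longleftrightarrow> (\<forall>x a y. 0 \<le> w x a y) \<and> (\<forall>x. (\<Sum>a\<in>UNIV. \<Sum>y\<in>UNIV. w x a y) \<le> 1)"

lemma Fn_nonneg: "good w \<Longrightarrow> 0 \<le> Fn Cb w t n s"
  unfolding Fn_def good_def by (auto intro!: sum_nonneg pw_nonneg)

lemma Fn_shift: "(\<Sum>i<N. Fn Cb w t (Suc i) s) = (if s \<in> Cb then 0 else (\<Sum>a\<in>UNIV. \<Sum>y\<in>UNIV. w s a y * (\<Sum>i<N. Fn Cb w t i y)))"
  by (simp add: Fn_Suc sum_distrib_left sum.swap[of _ "{..<N}"])

lemma Fn_partial: "good w \<Longrightarrow> (\<Sum>n<N. Fn Cb w t n s) \<le> 1"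
proof (induction N arbitrary: s)
  case 0 then show ?case by simp
next
  case (Suc N)
  have g: "\<And>x a y. 0 \<le> w x a y" "(\<Sum>a\<in>UNIV. \<Sum>y\<in>UNIV. w s a y) \<le> 1" using Suc.prems by (auto simp: good_def)
  have "(\<Sum>a\<in>UNIV. \<Sum>y\<in>UNIV. w s a y * (\<Sum>i<N. Fn Cb w t i y)) \<le> (\<Sum>a\<in>UNIV. \<Sum>y\<in>UNIV. w s a y)"
    by (intro sum_mono mult_right_le_one_le g Suc.IH Suc.prems sum_nonneg Fn_nonneg)
  then show ?case using g unfolding sum.lessThan_Suc_shift
    by (auto simp: Fn_shift Fn_0)
qed

lemma Fn_summable: "good w \<Longrightarrow> summable (\<lambda>n. Fn Cb w t n s)"
  by (rule summableI_nonneg_bounded[OF Fn_nonneg Fn_partial])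

definition V :: "'s::finite set \<Rightarrow> ('s \<Rightarrow> 'a::finite \<Rightarrow> 's \<Rightarrow> real) \<Rightarrow> 's \<Rightarrow> 's \<Rightarrow> real" where
  "V Cb w t s = (\<Sum>n. Fn Cb w t n s)"

lemma V_nonneg: "good w \<Longrightarrow> 0 \<le> V Cb w t s"
  unfolding V_def by (intro suminf_nonneg Fn_summable Fn_nonneg)

lemma V_le1: "good w \<Longrightarrow> V Cb w t s \<le> 1"
  unfolding V_def by (intro suminf_le_const Fn_summable Fn_partial)

lemma partial_le_V: "good w \<Longrightarrow> (\<Sum>n<N. Fn Cb w t n s) \<le> V Cb w t s"
  unfolding V_def by (intro sum_le_suminf Fn_summable Fn_nonneg) auto

lemma sum_suminf_w: assumes "good w"
  shows "(\<Sum>n. \<Sum>a\<in>UNIV. \<Sum>y\<in>UNIV. w s a y * Fn Cb w t n y) = (\<Sum>a\<in>UNIV. \<Sum>y\<in>UNIV. w s a y * V Cb w t y)"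
    and "summable (\<lambda>n. \<Sum>a\<in>UNIV. \<Sum>y\<in>UNIV. w s a y * Fn Cb w t n y)"
proof -
  have s1: "summable (\<lambda>n. w s a y * Fn Cb w t n y)" for a y
    by (intro summable_mult Fn_summable assms)
  have s2: "summable (\<lambda>n. \<Sum>y\<in>UNIV. w s a y * Fn Cb w t n y)" for a
    by (intro summable_sum s1)
  show "summable (\<lambda>n. \<Sum>a\<in>UNIV. \<Sum>y\<in>UNIV. w s a y * Fn Cb w t n y)"
    by (intro summable_sum s2)
  have "(\<Sum>n. \<Sum>a\<in>UNIV. \<Sum>y\<in>UNIV. w s a y * Fn Cb w t n y) = (\<Sum>a\<in>UNIV. \<Sum>n. \<Sum>y\<in>UNIV. w s a y * Fn Cb w t n y)"
    by (rule suminf_sum[OF s2])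
  also have "\<dots> = (\<Sum>a\<in>UNIV. \<Sum>y\<in>UNIV. \<Sum>n. w s a y * Fn Cb w t n y)"
    by (intro sum.cong refl suminf_sum s1)
  also have "\<dots> = (\<Sum>a\<in>UNIV. \<Sum>y\<in>UNIV. w s a y * V Cb w t y)"
    unfolding V_def by (intro sum.cong refl suminf_mult Fn_summable assms)
  finally show "(\<Sum>n. \<Sum>a\<in>UNIV. \<Sum>y\<in>UNIV. w s a y * Fn Cb w t n y) = (\<Sum>a\<in>UNIV. \<Sum>y\<in>UNIV. w s a y * V Cb w t y)" .
qed

lemma V_rec: assumes "good w"
  shows "V Cb w t s = (if s \<in> Cb then (if s = t then 1 else 0) else (\<Sum>a\<in>UNIV. \<Sum>y\<in>UNIV. w s a y * V Cb w t y))"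
proof -
  have "(\<Sum>n. Fn Cb w t (Suc n) s) = V Cb w t s - Fn Cb w t 0 s"
    unfolding V_def by (rule suminf_split_head[OF Fn_summable[OF assms]])
  moreover have "(\<Sum>n. Fn Cb w t (Suc n) s) = (if s \<in> Cb then 0 else (\<Sum>a\<in>UNIV. \<Sum>y\<in>UNIV. w s a y * V Cb w t y))"
    by (simp add: Fn_Suc sum_suminf_w[OF assms])
  ultimately show ?thesis by (auto simp: Fn_0)
qed

lemma V_mono: "good w1 \<Longrightarrow> good w2 \<Longrightarrow> (\<And>x a y. w1 x a y \<le> w2 x a y) \<Longrightarrow> V Cb w1 t s \<le> V Cb w2 t s"
  unfolding V_def
proof (intro suminf_le allI Fn_summable)
  fix n assume "good w1" "good w2" "\<And>x a y. w1 x a y \<le> w2 x a y"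
  then show "Fn Cb w1 t n s \<le> Fn Cb w2 t n s"
    unfolding Fn_def good_def by (intro sum_mono pw_mono) auto
qed

lemma T0_sum: "stopped_sum (T0_is Cb) (\<lambda>x xs. path_weight w x xs) s t = V Cb w t s"
  unfolding stopped_sum_def V_def Fn_def by simp

lemma T1_sum: assumes "good w"
  shows "stopped_sum (T1_is Cb) (\<lambda>x xs. path_weight w x xs) s t = (\<Sum>a\<in>UNIV. \<Sum>y\<in>UNIV. w s a y * V Cb w t y)"
proof -
  define G where "G n = (\<Sum>xs\<in>{xs. length xs = n \<and> T1_is Cb s xs \<and> last (traj s xs) = t}. path_weight w s xs)" for n
  have G0: "G 0 = 0" unfolding G_def by (simp add: T1_Nil)
  have GS: "G (Suc n) = (\<Sum>a\<in>UNIV. \<Sum>y\<in>UNIV. w s a y * Fn Cb w t n y)" for n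
    unfolding G_def Fn_alt filt[OF finite_len] sum_lists_Suc
    by (auto simp: T1_Cons last_traj_Cons sum_distrib_left intro!: sum.cong)
  have sG: "summable (\<lambda>n. G (Suc n))" unfolding GS by (rule sum_suminf_w(2)[OF assms])
  then have "summable G" using summable_Suc_iff by blast
  from suminf_split_head[OF this] have "suminf G = (\<Sum>n. G (Suc n))" using G0 by simp
  also have "\<dots> = (\<Sum>a\<in>UNIV. \<Sum>y\<in>UNIV. w s a y * V Cb w t y)" unfolding GS by (rule sum_suminf_w(1)[OF assms])
  finally show ?thesis unfolding stopped_sum_def G_def by simp
qed



lemma restrictP_zero: "x \<notin> C \<Longrightarrow> restrictP C P x a y = 0"
  by (simp add: restrictP_def)

lemma restrictP_nonneg: "\<forall>s a s'. 0 \<le> P s a s' \<Longrightarrow> 0 \<le> restrictP C P x a y"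
  by (auto simp: restrictP_def intro!: add_nonneg_nonneg sum_nonneg)

lemma restrictP_sum:
  fixes P :: "'s::finite \<Rightarrow> 'a \<Rightarrow> 's \<Rightarrow> real"
  assumes "x \<in> C"
  shows "(\<Sum>y\<in>UNIV. restrictP C P x a y) = (\<Sum>y\<in>UNIV. P x a y)"
proof -
  have "(\<Sum>y\<in>UNIV. restrictP C P x a y) = (\<Sum>y\<in>C. restrictP C P x a y)"
    by (rule sum.mono_neutral_right) (auto simp: restrictP_def)
  also have "\<dots> = (\<Sum>y\<in>C. P x a y + (if y = x then (\<Sum>s''\<in>-C. P x a s'') else 0))"
    using assms by (intro sum.cong) (auto simp: restrictP_def)
  also have "\<dots> = (\<Sum>y\<in>C. P x a y) + (\<Sum>s''\<in>-C. P x a s'')"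
    using assms by (simp add: sum.distrib)
  also have "\<dots> = (\<Sum>y\<in>UNIV. P x a y)"
    using sum.subset_diff[of C UNIV "P x a"] by (simp add: Compl_eq_Diff_UNIV)
  finally show ?thesis .
qed

lemma decomp:
  fixes \<omega> :: "'a::finite \<Rightarrow> 's::finite \<Rightarrow> real"
  assumes "t \<notin> A" "\<And>y. y \<notin> A \<Longrightarrow> y \<noteq> t \<Longrightarrow> \<phi> y = 0" "\<phi> t = 1"
  shows "(\<Sum>a\<in>UNIV. \<Sum>y\<in>UNIV. \<omega> a y * \<phi> y) = (\<Sum>y\<in>A. \<Sum>a\<in>UNIV. \<omega> a y * \<phi> y) + (\<Sum>a\<in>UNIV. \<omega> a t)"
proof -
  have "(\<Sum>a\<in>UNIV. \<Sum>y\<in>UNIV. \<omega> a y * \<phi> y) = (\<Sum>y\<in>UNIV. \<Sum>a\<in>UNIV. \<omega> a y * \<phi> y)"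
    by (rule sum.swap)
  also have "\<dots> = (\<Sum>y\<in>insert t A. \<Sum>a\<in>UNIV. \<omega> a y * \<phi> y)"
    by (rule sum.mono_neutral_right) (auto simp: assms(2))
  also have "\<dots> = (\<Sum>y\<in>A. \<Sum>a\<in>UNIV. \<omega> a y * \<phi> y) + (\<Sum>a\<in>UNIV. \<omega> a t)"
    using assms(1,3) by (simp add: sum.insert)
  finally show ?thesis .
qed



theorem proposition3:
  fixes P Gam :: "'s::finite \<Rightarrow> 'a::finite \<Rightarrow> 's \<Rightarrow> real"
    and pol :: "'s \<Rightarrow> 'a \<Rightarrow> real"
    and B Ci Cb :: "'s set"
  assumes P_nonneg: "\<forall>s a s'. 0 \<le> P s a s'"
    and P_stoch: "\<forall>s a. (\<Sum>s'\<in>UNIV. P s a s') = 1"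
    and Gam_range: "\<forall>s a s'. 0 < Gam s a s' \<and> Gam s a s' < 1"
    and cluster_disj: "Ci \<inter> Cb = {}"
    and interior: "Ci \<subseteq> - B"
    and boundary: "Cb \<subseteq> B"
    and policy: "\<forall>s\<in>Ci \<union> Cb. (\<forall>a. 0 \<le> pol s a) \<and> (\<Sum>a\<in>UNIV. pol s a) = 1"
    and reach: "boundary_reachable (Ci \<union> Cb) Cb P pol"
  defines "H \<equiv> coarse_H Ci Cb P Gam pol"
    and "h \<equiv> hfun Ci Cb P pol"
    and "Pt \<equiv> Ptilde Ci Cb P pol"
    and "Ph \<equiv> P_h Ci Cb P pol"
    and "Pth \<equiv> P_th Ci Cb P pol"
  defines "Idx \<equiv> (\<lambda>s s'. s' \<in> Cb \<and> ((s \<in> Ci \<and> h s' s > 0) \<or> (s \<in> Cb \<and> Pt s s' > 0)))"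
    and "Sys \<equiv> (\<lambda>G s s'.
           (s \<in> Ci \<and> h s' s > 0 \<longrightarrow>
              G s s' = (\<Sum>s''\<in>{x \<in> Ci. h s' x > 0}. \<Sum>a'\<in>UNIV. Ph s' s a' s'' * Gam s a' s'' * G s'' s')
                       + (\<Sum>a'\<in>UNIV. Ph s' s a' s' * Gam s a' s'))
         \<and> (s \<in> Cb \<and> Pt s s' > 0 \<longrightarrow>
              G s s' = (\<Sum>s''\<in>{x \<in> Ci. h s' x > 0}. \<Sum>a'\<in>UNIV. Pth s' s a' s'' * Gam s a' s'' * G s'' s')
                       + (\<Sum>a'\<in>UNIV. Pth s' s a' s' * Gam s a' s')))"
  shows "(\<forall>s s'. Idx s s' \<longrightarrow> 0 \<le> H s s' \<and> Sys H s s')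
       \<and> (\<forall>G. (\<forall>s s'. Idx s s' \<longrightarrow> 0 \<le> G s s' \<and> Sys G s s')
              \<longrightarrow> (\<forall>s s'. Idx s s' \<longrightarrow> H s s' \<le> G s s'))"
proof -
  define C where "C = Ci \<union> Cb"
  define q where "q x a y = pol x a * restrictP C P x a y" for x a y
  define qg where "qg x a y = q x a y * Gam x a y" for x a y
  have q_nn: "0 \<le> q x a y" for x a y
  proof (cases "x \<in> C")
    case True then show ?thesis using policy restrictP_nonneg[OF P_nonneg]
      unfolding q_def C_def by (auto intro!: mult_nonneg_nonneg)
  qed (simp add: q_def restrictP_zero)
  have q_out: "x \<notin> C \<Longrightarrow> q x a y = 0" for x a y by (simp add: q_def restrictP_zero)
  have q_sum: "(\<Sum>a\<in>UNIV. \<Sum>y\<in>UNIV. q x a y) \<le> 1" for x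
  proof (cases "x \<in> C")
    case True
    have "(\<Sum>a\<in>UNIV. \<Sum>y\<in>UNIV. q x a y) = (\<Sum>a\<in>UNIV. pol x a * (\<Sum>y\<in>UNIV. P x a y))"
      unfolding q_def by (simp add: sum_distrib_left[symmetric] restrictP_sum[OF True])
    also have "\<dots> = 1" using P_stoch policy True unfolding C_def by simp
    finally show ?thesis by simp
  qed (simp add: q_out)
  have qg_le: "qg x a y \<le> q x a y" for x a y
    unfolding qg_def using q_nn[of x a y] Gam_range[rule_format, of x a y] by (simp add: mult_left_le)
  have qg_nn: "0 \<le> qg x a y" for x a y
    unfolding qg_def using q_nn[of x a y] Gam_range[rule_format, of x a y] by simp
  have good_q: "good q" unfolding good_def using q_nn q_sum by auto
  have good_qg: "good qg" unfolding good_def using qg_nn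
    by (auto intro: order_trans[OF sum_mono[OF sum_mono] q_sum] qg_le)
  have pp: "path_prob C P pol = (\<lambda>x xs. path_weight q x xs)"
    by (intro ext) (simp add: path_prob_def q_def[abs_def])
  have ppd: "(\<lambda>x xs. path_prob C P pol x xs * path_disc Gam x xs) = (\<lambda>x xs. path_weight qg x xs)"
    by (intro ext) (simp add: pp path_disc_def pw_mult qg_def[abs_def])
  have h_eq: "h t s = V Cb q t s" for t s
    unfolding h_def hfun_def C_def[symmetric] pp by (rule T0_sum)
  have Pt_eq: "Pt s t = (\<Sum>a\<in>UNIV. \<Sum>y\<in>UNIV. q s a y * V Cb q t y)" for s t
    unfolding Pt_def Ptilde_def C_def[symmetric] pp by (rule T1_sum[OF good_q])
  have H_eq: "H s t = (if s \<in> Cb then (\<Sum>a\<in>UNIV. \<Sum>y\<in>UNIV. qg s a y * V Cb qg t y) / Pt s t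
                      else V Cb qg t s / h t s)" for s t
    unfolding H_def coarse_H_def C_def[symmetric] ppd T1_sum[OF good_qg] T0_sum
    by (simp add: Pt_def h_def)
  have Ph_eq: "Ph t s a y = q s a y * h t y / h t s" for t s a y
    unfolding Ph_def P_h_def C_def[symmetric] h_def q_def by (simp add: algebra_simps)
  have Pth_eq: "Pth t s a y = q s a y * h t y / Pt s t" for t s a y
    unfolding Pth_def P_th_def C_def[symmetric] h_def Pt_def q_def by (simp add: algebra_simps)
  have h_nn: "0 \<le> h t s" for t s unfolding h_eq by (rule V_nonneg[OF good_q])
  have u_le_h: "V Cb qg t s \<le> h t s" for t s unfolding h_eq
    by (rule V_mono[OF good_qg good_q qg_le])
  have u_nn: "0 \<le> V Cb qg t s" for t s by (rule V_nonneg[OF good_qg])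
  have htt: "t \<in> Cb \<Longrightarrow> h t t = 1" for t unfolding h_eq by (subst V_rec[OF good_q]) simp
  have main: "(\<forall>s. Idx s t \<longrightarrow> 0 \<le> H s t \<and> Sys H s t) \<and>
     (\<forall>G. (\<forall>s s'. Idx s s' \<longrightarrow> 0 \<le> G s s' \<and> Sys G s s') \<longrightarrow> (\<forall>s. Idx s t \<longrightarrow> H s t \<le> G s t))"
    if tCb: "t \<in> Cb" for t
  proof -
    define A where "A = {x \<in> Ci. h t x > 0}"
    have tA: "t \<notin> A" using tCb cluster_disj by (auto simp: A_def)
    have rhs: "(\<Sum>y\<in>A. \<Sum>a'\<in>UNIV. (q s a' y * h t y / D) * Gam s a' y * G y t) + (\<Sum>a'\<in>UNIV. (q s a' t * h t t / D) * Gam s a' t)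
             = (\<Sum>a\<in>UNIV. \<Sum>y\<in>UNIV. qg s a y * (if y \<in> A then h t y * G y t else if y = t then 1 else 0)) / D"
      for D :: real and G :: "'s \<Rightarrow> 's \<Rightarrow> real" and s
      apply (subst decomp[OF tA])
      using tA htt[OF tCb] apply (auto)[2]
      using tA htt[OF tCb] by (simp add: add_divide_distrib sum_divide_distrib qg_def algebra_simps)
    have u_t: "V Cb qg t t = 1" using tCb by (subst V_rec[OF good_qg]) simp
    have u_zero: "V Cb qg t y = 0" if "y \<notin> A" "y \<noteq> t" for y
    proof -
      consider "y \<in> Cb" | "y \<in> Ci" | "y \<notin> C" unfolding C_def by blast
      then show ?thesis
      proof cases
        case 1 then show ?thesis using that by (subst V_rec[OF good_qg]) simp
      next
        case 2
        then have "h t y \<le> 0" using that by (auto simp: A_def)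
        then show ?thesis using u_le_h[of t y] u_nn[of t y] by simp
      next
        case 3
        then have "y \<notin> Cb" by (simp add: C_def)
        then show ?thesis using 3 by (subst V_rec[OF good_qg]) (simp add: qg_def q_out)
      qed
    qed
    have Ci_notCb: "y \<in> Ci \<Longrightarrow> y \<notin> Cb" for y using cluster_disj by blast
    have phiH: "(if y \<in> A then h t y * H y t else if y = t then 1 else 0) = V Cb qg t y" for y
    proof (cases "y \<in> A")
      case True
      then have "y \<notin> Cb" "h t y > 0" using Ci_notCb by (auto simp: A_def)
      then show ?thesis using True by (simp add: H_eq)
    qed (use u_t u_zero in auto)
    have sysH: "Sys H s t" for s
      unfolding Sys_def Ph_eq Pth_eq A_def[symmetric] rhs phiH
      using Ci_notCb by (auto simp: H_eq V_rec[OF good_qg, of Cb t s])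
    have nnH: "0 \<le> H s t" for s
      unfolding H_eq Pt_eq using u_nn h_nn q_nn qg_nn
      by (auto intro!: divide_nonneg_nonneg sum_nonneg mult_nonneg_nonneg V_nonneg good_q good_qg)
    show ?thesis
    proof (intro conjI allI impI)
      fix s show "0 \<le> H s t" by (rule nnH)
      fix s show "Sys H s t" by (rule sysH)
    next
      fix G assume solG: "\<forall>s s'. Idx s s' \<longrightarrow> 0 \<le> G s s' \<and> Sys G s s'"
      define Gx where "Gx y = (if y \<in> A then h t y * G y t else if y = t then 1 else 0)" for y
      have GA: "(\<Sum>a\<in>UNIV. \<Sum>z\<in>UNIV. qg y a z * Gx z) = h t y * G y t" if "y \<in> A" for y
      proof -
        have "Idx y t" using that tCb by (auto simp: Idx_def A_def)
        then have "Sys G y t" using solG by blast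
        then have "G y t = (\<Sum>a\<in>UNIV. \<Sum>z\<in>UNIV. qg y a z * Gx z) / h t y"
          using that unfolding Sys_def Ph_eq A_def[symmetric] rhs Gx_def by (auto simp: A_def)
        then show ?thesis using that by (auto simp: A_def)
      qed
      have GB: "G s t = (\<Sum>a\<in>UNIV. \<Sum>z\<in>UNIV. qg s a z * Gx z) / Pt s t" if "s \<in> Cb" "Pt s t > 0" for s
      proof -
        have "Idx s t" using that tCb by (auto simp: Idx_def)
        then have "Sys G s t" using solG by blast
        then show ?thesis
          using that unfolding Sys_def Pth_eq A_def[symmetric] rhs Gx_def by auto
      qed
      have part: "(\<Sum>n<N. Fn Cb qg t n y) \<le> Gx y" for N y
      proof (induction N arbitrary: y)
        case 0 show ?case
          using solG tCb by (auto simp: Gx_def A_def Idx_def intro!: mult_nonneg_nonneg h_nn)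
      next
        case (Suc N)
        consider "y \<in> Cb" | "y \<notin> Cb" "y \<in> A" | "y \<notin> Cb" "y \<notin> A" by blast
        then show ?case
        proof cases
          case 1
          then have "y \<notin> A" using Ci_notCb by (auto simp: A_def)
          then show ?thesis using 1 unfolding sum.lessThan_Suc_shift
            by (simp add: Fn_shift Fn_0 Gx_def)
        next
          case 2
          have "(\<Sum>a\<in>UNIV. \<Sum>z\<in>UNIV. qg y a z * (\<Sum>i<N. Fn Cb qg t i z)) \<le> (\<Sum>a\<in>UNIV. \<Sum>z\<in>UNIV. qg y a z * Gx z)"
            by (intro sum_mono mult_left_mono Suc.IH qg_nn)
          then show ?thesis using 2 GA[of y] unfolding sum.lessThan_Suc_shift
            by (simp add: Fn_shift Fn_0 Gx_def)
        next
          case 3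
          then have "y \<noteq> t" using tCb by auto
          then have "(\<Sum>n<Suc N. Fn Cb qg t n y) \<le> 0"
            using partial_le_V[OF good_qg, where N="Suc N" and Cb=Cb and t=t and s=y] u_zero[OF 3(2)] by simp
          then show ?thesis using 3 \<open>y \<noteq> t\<close> by (simp add: Gx_def)
        qed
      qed
      have uG: "V Cb qg t y \<le> Gx y" for y
        unfolding V_def by (intro suminf_le_const Fn_summable good_qg part)
      fix s assume Is: "Idx s t"
      then consider "s \<in> Ci" "h t s > 0" | "s \<in> Cb" "Pt s t > 0" by (auto simp: Idx_def)
      then show "H s t \<le> G s t"
      proof cases
        case 1
        then have "s \<in> A" "s \<notin> Cb" using Ci_notCb by (auto simp: A_def)
        then show ?thesis using uG[of s] 1 by (simp add: H_eq Gx_def pos_divide_le_eq mult.commute)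
      next
        case 2
        have "(\<Sum>a\<in>UNIV. \<Sum>y\<in>UNIV. qg s a y * V Cb qg t y) \<le> (\<Sum>a\<in>UNIV. \<Sum>z\<in>UNIV. qg s a z * Gx z)"
          by (intro sum_mono mult_left_mono uG qg_nn)
        then show ?thesis using 2 GB[OF 2] by (simp add: H_eq divide_right_mono)
      qed
    qed
  qed
  show ?thesis
    using main unfolding Idx_def by blast
qed


end
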